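(* Let $a\ge 0$ be a real number and let $T$ be a tree on $n$ vertices with degrees $k_1,\dots,k_n$, and set $\langle k^2\rangle=\frac{1}{n}\sum_{i=1}^n k_i^2$ and $E_0[C]=\frac{n}{6}\left(n-1-\langle k^2\rangle\right)$. If $n>3a+3$ and $E_0[C]\le a$, then $T$ is a star tree, i.e. $T$ has a vertex of degree $n-1$.
   Context: $E_0[C]$ equals the expected number of crossings when the vertices of $T$ are placed at positions $1,\dots,n$ by a uniformly random permutation, where two edges $\{s,t\}$, $\{u,v\}$ cross iff exactly one of the positions of $s,t$ lies strictly between the positions of $u$ and $v$ and the other lies strictly outside that interval. *)

theory Defs
  imports Complex_Main
begin

definition simple_graph :: "'a set \<Rightarrow> 'a set set \<Rightarrow> bool" where
  "simple_graph V E \<longleftrightarrow> finite V \<and>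
     (\<forall>e\<in>E. \<exists>u v. u \<in> V \<and> v \<in> V \<and> u \<noteq> v \<and> e = {u, v})"

definition is_walk :: "'a set \<Rightarrow> 'a set set \<Rightarrow> 'a list \<Rightarrow> bool" where
  "is_walk V E xs \<longleftrightarrow> xs \<noteq> [] \<and> set xs \<subseteq> V \<and>
     (\<forall>i. Suc i < length xs \<longrightarrow> {xs ! i, xs ! Suc i} \<in> E)"

definition graph_connected :: "'a set \<Rightarrow> 'a set set \<Rightarrow> bool" where
  "graph_connected V E \<longleftrightarrow>
     (\<forall>u\<in>V. \<forall>v\<in>V. \<exists>xs. is_walk V E xs \<and> hd xs = u \<and> last xs = v)"

definition is_cycle :: "'a set \<Rightarrow> 'a set set \<Rightarrow> 'a list \<Rightarrow> bool" where
  "is_cycle V E xs \<longleftrightarrow> length xs \<ge> 3 \<and> distinct xs \<and> is_walk V E xs \<and>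
     {last xs, hd xs} \<in> E"

definition acyclic_graph :: "'a set \<Rightarrow> 'a set set \<Rightarrow> bool" where
  "acyclic_graph V E \<longleftrightarrow> \<not> (\<exists>xs. is_cycle V E xs)"

definition is_tree :: "'a set \<Rightarrow> 'a set set \<Rightarrow> bool" where
  "is_tree V E \<longleftrightarrow> simple_graph V E \<and> V \<noteq> {} \<and> graph_connected V E \<and> acyclic_graph V E"

definition degree :: "'a set set \<Rightarrow> 'a \<Rightarrow> nat" where
  "degree E v = card {e \<in> E. v \<in> e}"

definition second_moment_degree :: "'a set \<Rightarrow> 'a set set \<Rightarrow> real" where
  "second_moment_degree V E = (\<Sum>v\<in>V. real (degree E v) ^ 2) / real (card V)"

definition E0C :: "'a set \<Rightarrow> 'a set set \<Rightarrow> real" where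
  "E0C V E = real (card V) / 6 * (real (card V) - 1 - second_moment_degree V E)"

end

theory Submission
  imports Defs
begin

lemma edge_props:
  assumes "simple_graph V E" "{a,b} \<in> E"
  shows "a \<in> V \<and> b \<in> V \<and> a \<noteq> b"
  using assms unfolding simple_graph_def by (metis doubleton_eq_iff)

lemma edge_form:
  assumes "simple_graph V E" "e \<in> E"
  obtains u v where "u \<in> V" "v \<in> V" "u \<noteq> v" "e = {u,v}"
  using assms unfolding simple_graph_def by blast

lemma finite_E: "simple_graph V E \<Longrightarrow> finite E"
  unfolding simple_graph_def
  by (rule finite_subset[of E "Pow V"]) auto

lemma walk_take: "is_walk V E xs \<Longrightarrow> 0 < k \<Longrightarrow> is_walk V E (take k xs)"
  unfolding is_walk_def using set_take_subset[of k xs] by auto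

lemma walk_cons: "is_walk V E xs \<Longrightarrow> z \<in> V \<Longrightarrow> {z, hd xs} \<in> E \<Longrightarrow> is_walk V E (z # xs)"
  unfolding is_walk_def
proof (intro conjI allI impI)
  fix i assume w: "xs \<noteq> [] \<and> set xs \<subseteq> V \<and> (\<forall>i. Suc i < length xs \<longrightarrow> {xs ! i, xs ! Suc i} \<in> E)"
    and z: "z \<in> V" "{z, hd xs} \<in> E" and i: "Suc i < length (z # xs)"
  show "{(z # xs) ! i, (z # xs) ! Suc i} \<in> E"
  proof (cases i)
    case 0 then show ?thesis using z w by (simp add: hd_conv_nth)
  next
    case (Suc j) then show ?thesis using w i by auto
  qed
qed auto

lemma walk_shortcut:
  assumes w: "is_walk V E xs" and ij: "i < j" "j < length xs" and eq: "xs ! i = xs ! j"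
  shows "is_walk V E (take i xs @ drop j xs) \<and> hd (take i xs @ drop j xs) = hd xs
       \<and> last (take i xs @ drop j xs) = last xs \<and> length (take i xs @ drop j xs) < length xs"
proof -
  let ?ys = "take i xs @ drop j xs"
  have len: "length ?ys = i + (length xs - j)" using ij by simp
  have edges: "\<And>k. Suc k < length xs \<Longrightarrow> {xs ! k, xs ! Suc k} \<in> E" using w unfolding is_walk_def by blast
  have "is_walk V E ?ys"
    unfolding is_walk_def
  proof (intro conjI allI impI)
    show "?ys \<noteq> []" using ij by simp
    show "set ?ys \<subseteq> V" using w set_take_subset[of i xs] set_drop_subset[of j xs] unfolding is_walk_def by auto
  next
    fix k assume k: "Suc k < length ?ys"
    consider "Suc k < i" | "Suc k = i" | "i \<le> k" by linarith
    then show "{?ys ! k, ?ys ! Suc k} \<in> E"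
    proof cases
      case 1 then show ?thesis using ij edges by (simp add: nth_append)
    next
      case 2
      have "?ys ! k = xs ! k" using 2 ij by (simp add: nth_append)
      moreover have "?ys ! Suc k = xs ! j" using 2 ij by (simp add: nth_append)
      ultimately show ?thesis using edges[of k] 2 eq ij by simp
    next
      case 3
      have "?ys ! k = xs ! (j + (k - i))" using 3 ij by (simp add: nth_append)
      moreover have "?ys ! Suc k = xs ! Suc (j + (k - i))" using 3 ij
        by (simp add: nth_append Suc_diff_le)
      moreover have "Suc (j + (k - i)) < length xs" using k 3 ij by simp
      ultimately show ?thesis using edges by simp
    qed
  qed
  moreover have "hd ?ys = hd xs"
  proof (cases i)
    case 0
    have "xs \<noteq> []" using ij by auto
    then show ?thesis using 0 ij eq by (simp add: hd_drop_conv_nth hd_conv_nth)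
  next
    case (Suc i') then show ?thesis using ij by (cases xs) auto
  qed
  moreover have "last ?ys = last xs" using ij by simp
  ultimately show ?thesis using len ij by simp
qed

lemma distinct_walk:
  "is_walk V E xs \<Longrightarrow> \<exists>ys. is_walk V E ys \<and> distinct ys \<and> hd ys = hd xs \<and> last ys = last xs"
proof (induction "length xs" arbitrary: xs rule: less_induct)
  case less
  show ?case
  proof (cases "distinct xs")
    case True then show ?thesis using less.prems by blast
  next
    case False
    then obtain i j where "i < length xs" "j < length xs" "i \<noteq> j" "xs ! i = xs ! j"
      by (auto simp: distinct_conv_nth)
    then obtain i j where ij: "i < j" "j < length xs" "xs ! i = xs ! j"
      by (metis linorder_neqE_nat)
    from walk_shortcut[OF less.prems ij] less.hyps show ?thesis by metis
  qed
qed

lemma walk3: "a \<in> V \<Longrightarrow> b \<in> V \<Longrightarrow> c \<in> V \<Longrightarrow> {a,b} \<in> E \<Longrightarrow> {b,c} \<in> E \<Longrightarrow> is_walk V E [a,b,c]"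
  unfolding is_walk_def
proof (intro conjI allI impI)
  fix i assume "a \<in> V" "b \<in> V" "c \<in> V" "{a,b} \<in> E" "{b,c} \<in> E" "Suc i < length [a,b,c]"
  moreover then have "i = 0 \<or> i = 1" by auto
  ultimately show "{[a, b, c] ! i, [a, b, c] ! Suc i} \<in> E" by auto
qed auto

lemma walk4: "a \<in> V \<Longrightarrow> b \<in> V \<Longrightarrow> c \<in> V \<Longrightarrow> d \<in> V \<Longrightarrow> {a,b} \<in> E \<Longrightarrow> {b,c} \<in> E \<Longrightarrow> {c,d} \<in> E \<Longrightarrow> is_walk V E [a,b,c,d]"
  unfolding is_walk_def
proof (intro conjI allI impI)
  fix i assume "a \<in> V" "b \<in> V" "c \<in> V" "d \<in> V" "{a,b} \<in> E" "{b,c} \<in> E" "{c,d} \<in> E" "Suc i < length [a,b,c,d]"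
  moreover then have "i = 0 \<or> i = 1 \<or> i = 2" by auto
  ultimately show "{[a, b, c, d] ! i, [a, b, c, d] ! Suc i} \<in> E" by auto
qed auto

lemma no_triangle:
  assumes "simple_graph V E" "acyclic_graph V E" "{a,b} \<in> E" "{b,c} \<in> E" "{c,a} \<in> E" "a \<noteq> c"
  shows False
proof -
  have "a \<in> V" "b \<in> V" "c \<in> V" "a \<noteq> b" "b \<noteq> c" using edge_props assms by metis+
  then have "is_cycle V E [a,b,c]" using assms walk3 unfolding is_cycle_def by auto
  then show False using assms unfolding acyclic_graph_def by blast
qed

lemma no_square:
  assumes "simple_graph V E" "acyclic_graph V E" "{a,b} \<in> E" "{b,c} \<in> E" "{c,d} \<in> E" "{d,a} \<in> E"
    "distinct [a,b,c,d]"
  shows False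
proof -
  have "a \<in> V" "b \<in> V" "c \<in> V" "d \<in> V" using edge_props assms by metis+
  then have "is_cycle V E [a,b,c,d]" using assms walk4 unfolding is_cycle_def by auto
  then show False using assms unfolding acyclic_graph_def by blast
qed

lemma leaf_exists:
  assumes sg: "simple_graph V E" and ac: "acyclic_graph V E" and ne: "E \<noteq> {}"
  shows "\<exists>x y. {x,y} \<in> E \<and> x \<noteq> y \<and> (\<forall>e\<in>E. x \<in> e \<longrightarrow> e = {x,y})"
proof -
  let ?W = "{xs. is_walk V E xs \<and> distinct xs}"
  have finV: "finite V" using sg unfolding simple_graph_def by blast
  have "?W \<subseteq> {xs. set xs \<subseteq> V \<and> length xs \<le> card V}"
  proof
    fix ys assume "ys \<in> ?W"
    then have "set ys \<subseteq> V" "distinct ys" unfolding is_walk_def by auto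
    then have "length ys \<le> card V" using distinct_card[of ys] card_mono[OF finV] by metis
    then show "ys \<in> {xs. set xs \<subseteq> V \<and> length xs \<le> card V}" using \<open>set ys \<subseteq> V\<close> by simp
  qed
  then have finW: "finite ?W" using finite_lists_length_le[OF finV] finite_subset by blast
  obtain e0 where "e0 \<in> E" using ne by blast
  obtain u v where uv0: "u \<in> V" "v \<in> V" "u \<noteq> v" "e0 = {u,v}" by (rule edge_form[OF sg \<open>e0 \<in> E\<close>])
  then have uv: "u \<in> V" "v \<in> V" "u \<noteq> v" "{u,v} \<in> E" using \<open>e0 \<in> E\<close> by auto
  have "is_walk V E [v]" using uv unfolding is_walk_def by simp
  then have "is_walk V E [u,v]" using walk_cons[of V E "[v]" u] uv by simp
  then have "[u,v] \<in> ?W" using uv by simp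
  have bnd: "\<forall>ys. ys \<in> ?W \<longrightarrow> length ys < Suc (card V)"
  proof (intro allI impI)
    fix ys assume "ys \<in> ?W"
    then have "ys \<in> {xs. set xs \<subseteq> V \<and> length xs \<le> card V}" using \<open>?W \<subseteq> _\<close> by blast
    then show "length ys < Suc (card V)" by simp
  qed
  obtain xs where xsW: "xs \<in> ?W" and xsmax: "\<forall>ys\<in>?W. length ys \<le> length xs"
    using Lattices_Big.ex_has_greatest_nat[of "\<lambda>xs. xs \<in> ?W" "[u,v]" length "Suc (card V)", OF \<open>[u,v] \<in> ?W\<close> bnd]
    by blast
  have "length [u,v] \<le> length xs" using xsmax \<open>[u,v] \<in> ?W\<close> by blast
  then have len: "length xs \<ge> 2" by simp
  have walk: "is_walk V E xs" and dist: "distinct xs" using xsW by auto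
  define x where "x = xs ! 0"
  define y where "y = xs ! 1"
  have l1: "Suc 0 < length xs" using len by simp
  then have "{xs!0, xs!Suc 0} \<in> E" using walk unfolding is_walk_def by blast
  then have xy: "{x,y} \<in> E" unfolding x_def y_def by simp
  have "xs!0 \<noteq> xs!1" using nth_eq_iff_index_eq[OF dist, of 0 1] l1 by (cases xs) auto
  then have "x \<noteq> y" unfolding x_def y_def .
  moreover have "\<forall>e\<in>E. x \<in> e \<longrightarrow> e = {x,y}"
  proof (intro ballI impI)
    fix e assume e: "e \<in> E" "x \<in> e"
    obtain a b where ab: "a \<in> V" "b \<in> V" "a \<noteq> b" "e = {a,b}" by (rule edge_form[OF sg e(1)])
    define z where "z = (if x = a then b else a)"
    have z: "e = {x,z}" "z \<in> V" "z \<noteq> x" using ab e unfolding z_def by auto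
    show "e = {x,y}"
    proof (rule ccontr)
      assume "e \<noteq> {x,y}"
      then have zy: "z \<noteq> y" using z by auto
      show False
      proof (cases "z \<in> set xs")
        case False
        have "hd xs = x" using len unfolding x_def by (cases xs) auto
        then have "is_walk V E (z # xs)" using walk_cons[OF walk z(2)] e z by (simp add: insert_commute)
        then have "z # xs \<in> ?W" using dist False by simp
        then have "length (z # xs) \<le> length xs" using xsmax by blast
        then show False by simp
      next
        case True
        then obtain j where j: "j < length xs" "xs ! j = z" by (auto simp: in_set_conv_nth)
        have j0: "j \<noteq> 0" proof assume "j = 0" then show False using j z(3) unfolding x_def by simp qed
        have j1: "j \<noteq> 1" proof assume "j = 1" then show False using j zy unfolding y_def by simp qed
        have j2: "j \<ge> 2" using j0 j1 by linarith
        let ?c = "take (Suc j) xs"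
        have "is_walk V E ?c" using walk_take[OF walk] by simp
        moreover have "length ?c \<ge> 3" using j j2 by simp
        moreover have "distinct ?c" using dist by simp
        moreover have "last ?c = z" using j by (simp add: take_Suc_conv_app_nth)
        moreover have "hd ?c = x" using len unfolding x_def by (cases xs) auto
        ultimately have "is_cycle V E ?c" unfolding is_cycle_def using e z by (simp add: insert_commute)
        then show False using ac unfolding acyclic_graph_def by blast
      qed
    qed
  qed
  ultimately show ?thesis using xy by blast
qed

lemma acyclic_card:
  "simple_graph V E \<Longrightarrow> acyclic_graph V E \<Longrightarrow> V \<noteq> {} \<Longrightarrow> card E < card V"
proof (induction "card V" arbitrary: V E rule: less_induct)
  case less
  have finV: "finite V" using less.prems unfolding simple_graph_def by blast
  show ?case
  proof (cases "E = {}")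
    case True then show ?thesis using finV less.prems by (simp add: card_gt_0_iff)
  next
    case False
    obtain x y where xy: "{x,y} \<in> E" "x \<noteq> y" "\<forall>e\<in>E. x \<in> e \<longrightarrow> e = {x,y}"
      using leaf_exists[OF less.prems(1,2) False] by blast
    have xV: "x \<in> V" "y \<in> V" using edge_props[OF less.prems(1) xy(1)] by auto
    let ?V = "V - {x}" and ?E = "E - {{x,y}}"
    have sg: "simple_graph ?V ?E"
      using less.prems(1) xy(3) finV unfolding simple_graph_def by fastforce
    have "\<And>xs. is_cycle ?V ?E xs \<Longrightarrow> is_cycle V E xs"
      unfolding is_cycle_def is_walk_def by blast
    then have ac: "acyclic_graph ?V ?E" using less.prems(2) unfolding acyclic_graph_def by blast
    have "?V \<noteq> {}" using xV xy(2) by blast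
    have "card V > 0" using finV xV card_gt_0_iff by blast
    then have lt: "card ?V < card V" using finV xV by simp
    have "card ?E < card ?V" using less.hyps[OF lt sg ac \<open>?V \<noteq> {}\<close>] .
    moreover have "card ?E = card E - 1" using xy(1) by simp
    moreover have "card E > 0" using False finite_E[OF less.prems(1)] by (simp add: card_gt_0_iff)
    moreover have "card ?V = card V - 1" using xV finV by simp
    ultimately show ?thesis by linarith
  qed
qed

lemma walk_peel: "is_walk V E (a # b # r) \<Longrightarrow> {a,b} \<in> E \<and> is_walk V E (b # r)"
proof -
  assume w: "is_walk V E (a # b # r)"
  have "Suc 0 < length (a#b#r)" by simp
  then have "{(a#b#r)!0, (a#b#r)!Suc 0} \<in> E" using w unfolding is_walk_def by blast
  moreover have "is_walk V E (b # r)"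
    unfolding is_walk_def
  proof (intro conjI allI impI)
    show "set (b # r) \<subseteq> V" using w unfolding is_walk_def by auto
  next
    fix i assume "Suc i < length (b # r)"
    then have "Suc (Suc i) < length (a # b # r)" by simp
    then have "{(a#b#r) ! Suc i, (a#b#r) ! Suc (Suc i)} \<in> E" using w unfolding is_walk_def by blast
    then show "{(b # r) ! i, (b # r) ! Suc i} \<in> E" by simp
  qed simp
  ultimately show ?thesis by simp
qed

lemma nonadj:
  assumes sg: "simple_graph V E" and x: "x \<in> V" and d: "degree E x \<noteq> card V - 1"
  shows "\<exists>y\<in>V. y \<noteq> x \<and> {x,y} \<notin> E"
proof (rule ccontr)
  assume "\<not> ?thesis"
  then have all: "\<forall>y\<in>V - {x}. {x,y} \<in> E" by blast
  have finV: "finite V" using sg unfolding simple_graph_def by blast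
  have eq: "{e \<in> E. x \<in> e} = (\<lambda>y. {x,y}) ` (V - {x})"
  proof
    show "{e \<in> E. x \<in> e} \<subseteq> (\<lambda>y. {x,y}) ` (V - {x})"
    proof
      fix e assume "e \<in> {e \<in> E. x \<in> e}"
      then have e: "e \<in> E" "x \<in> e" by auto
      obtain a b where ab: "a \<in> V" "b \<in> V" "a \<noteq> b" "e = {a,b}" by (rule edge_form[OF sg e(1)])
      define z where "z = (if x = a then b else a)"
      have "e = {x,z}" "z \<in> V - {x}" using ab e unfolding z_def by auto
      then show "e \<in> (\<lambda>y. {x,y}) ` (V - {x})" by blast
    qed
    show "(\<lambda>y. {x,y}) ` (V - {x}) \<subseteq> {e \<in> E. x \<in> e}" using all by auto
  qed
  have "inj_on (\<lambda>y. {x,y}) (V - {x})"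
    by (rule inj_onI) (auto simp: doubleton_eq_iff)
  then have "degree E x = card (V - {x})" unfolding degree_def eq by (rule card_image)
  also have "\<dots> = card V - 1" using finV x by simp
  finally show False using d by simp
qed

lemma conn_path:
  assumes "graph_connected V E" "u \<in> V" "v \<in> V"
  shows "\<exists>ws. is_walk V E ws \<and> distinct ws \<and> hd ws = u \<and> last ws = v"
proof -
  obtain xs where "is_walk V E xs" "hd xs = u" "last xs = v" using assms unfolding graph_connected_def by blast
  then show ?thesis using distinct_walk by metis
qed

lemma path3:
  assumes w: "is_walk V E ws" and d: "distinct ws" and h: "hd ws = u" and l: "last ws = v"
    and uv: "u \<noteq> v" "{u,v} \<notin> E"
  shows "\<exists>w p r. ws = u # w # p # r \<and> {u,w} \<in> E \<and> {w,p} \<in> E \<and> distinct (u#w#p#r) \<and> is_walk V E (p # r)"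
proof -
  have "ws \<noteq> []" using w unfolding is_walk_def by blast
  then obtain t where t: "ws = u # t" using h by (cases ws) auto
  then have "t \<noteq> []" using l uv by auto
  then obtain w t' where t': "t = w # t'" by (cases t) auto
  have "t' \<noteq> []"
  proof
    assume "t' = []"
    then have "ws = [u,w]" "v = w" using t t' l by auto
    then show False using walk_peel[of V E u w "[]"] w uv by auto
  qed
  then obtain p r where r: "t' = p # r" by (cases t') auto
  have ws: "ws = u # w # p # r" using t t' r by simp
  from walk_peel[of V E u w "p # r"] w ws have e1: "{u,w} \<in> E" and w2: "is_walk V E (w # p # r)" by auto
  from walk_peel[OF w2] have e2: "{w,p} \<in> E" and w3: "is_walk V E (p # r)" by auto
  show ?thesis using ws e1 e2 w3 d by blast
qed

lemma path4:
  assumes tr: "is_tree V E" and ns: "\<forall>v\<in>V. degree E v \<noteq> card V - 1"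
  shows "\<exists>a b c d. distinct [a,b,c,d] \<and> {a,b} \<in> E \<and> {b,c} \<in> E \<and> {c,d} \<in> E"
proof -
  have sg: "simple_graph V E" and ac: "acyclic_graph V E" and cn: "graph_connected V E" and ne: "V \<noteq> {}"
    using tr unfolding is_tree_def by auto
  obtain x where x: "x \<in> V" using ne by blast
  have "degree E x \<noteq> card V - 1" using ns x by blast
  then obtain y where y: "y \<in> V" "y \<noteq> x" "{x,y} \<notin> E" using nonadj[OF sg x] by blast
  obtain ws where ws: "is_walk V E ws" "distinct ws" "hd ws = x" "last ws = y"
    using conn_path[OF cn x y(1)] by blast
  have "\<exists>w p r. ws = x # w # p # r \<and> {x,w} \<in> E \<and> {w,p} \<in> E \<and> distinct (x#w#p#r) \<and> is_walk V E (p # r)"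
    by (rule path3[OF ws y(2)[symmetric] y(3)])
  then obtain w p r where wpr: "ws = x # w # p # r" "{x,w} \<in> E" "{w,p} \<in> E" "distinct (x#w#p#r)" "is_walk V E (p # r)"
    by blast
  show ?thesis
  proof (cases r)
    case (Cons q r')
    have "{p,q} \<in> E" using walk_peel[of V E p q r'] wpr(5) Cons by simp
    moreover have "distinct [x,w,p,q]" using wpr(4) Cons by auto
    ultimately show ?thesis using wpr(2,3) by (intro exI[of _ x] exI[of _ w] exI[of _ p] exI[of _ q] conjI)
  next
    case Nil
    then have py: "p = y" using wpr ws by simp
    have wV: "w \<in> V" using edge_props[OF sg wpr(3)] by blast
    have "degree E w \<noteq> card V - 1" using ns wV by blast
    then obtain z where z: "z \<in> V" "z \<noteq> w" "{w,z} \<notin> E" using nonadj[OF sg wV] by blast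
    obtain zs where zs: "is_walk V E zs" "distinct zs" "hd zs = w" "last zs = z"
      using conn_path[OF cn wV z(1)] by blast
    have "\<exists>p2 q2 r2. zs = w # p2 # q2 # r2 \<and> {w,p2} \<in> E \<and> {p2,q2} \<in> E \<and> distinct (w#p2#q2#r2) \<and> is_walk V E (q2 # r2)"
      by (rule path3[OF zs z(2)[symmetric] z(3)])
    then obtain p2 q2 r2 where pq: "zs = w # p2 # q2 # r2" "{w,p2} \<in> E" "{p2,q2} \<in> E" "distinct (w#p2#q2#r2)"
      by blast
    have xw: "x \<noteq> w" using wpr(4) by simp
    show ?thesis
    proof (cases "p2 = x")
      case False
      have "q2 \<noteq> x"
      proof
        assume "q2 = x"
        then have "{p2,x} \<in> E" using pq(3) by simp
        moreover have "x \<noteq> p2" using False by simp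
        ultimately show False using no_triangle[OF sg ac wpr(2) pq(2)] by blast
      qed
      then have "distinct [x,w,p2,q2]" using pq(4) xw False by auto
      then show ?thesis using wpr(2) pq(2,3) by (intro exI[of _ x] exI[of _ w] exI[of _ p2] exI[of _ q2] conjI)
    next
      case True
      have "q2 \<noteq> y" using pq(3) y(3) True by auto
      moreover have "y \<noteq> w" using wpr(4) py by auto
      ultimately have "distinct [y,w,x,q2]" using pq(4) xw True y(2) by auto
      moreover have "{y,w} \<in> E" using wpr(3) py by (simp add: insert_commute)
      moreover have "{w,x} \<in> E" using wpr(2) by (simp add: insert_commute)
      moreover have "{x,q2} \<in> E" using pq(3) True by simp
      ultimately show ?thesis by (intro exI[of _ y] exI[of _ w] exI[of _ x] exI[of _ q2] conjI)
    qed
  qed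
qed

lemma real_degree: "finite E \<Longrightarrow> real (degree E v) = (\<Sum>e\<in>E. if v \<in> e then 1 else 0)"
proof -
  assume fin: "finite E"
  have "real (degree E v) = (\<Sum>e\<in>{e \<in> E. v \<in> e}. 1)" unfolding degree_def by simp
  also have "\<dots> = (\<Sum>e\<in>E. if v \<in> e then 1 else 0)" using sum.inter_filter[OF fin] .
  finally show ?thesis .
qed

lemma sumsq:
  assumes sg: "simple_graph V E"
  shows "(\<Sum>v\<in>V. real (degree E v) ^ 2) = (\<Sum>e\<in>E. \<Sum>f\<in>E. real (card (e \<inter> f)))"
proof -
  have finV: "finite V" using sg unfolding simple_graph_def by blast
  have finE: "finite E" using finite_E[OF sg] .
  have sub: "\<And>e. e \<in> E \<Longrightarrow> e \<subseteq> V"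
  proof -
    fix e assume "e \<in> E"
    then obtain u v where "u \<in> V" "v \<in> V" "u \<noteq> v" "e = {u,v}" by (rule edge_form[OF sg])
    then show "e \<subseteq> V" by simp
  qed
  have "(\<Sum>v\<in>V. real (degree E v) ^ 2)
      = (\<Sum>v\<in>V. \<Sum>e\<in>E. \<Sum>f\<in>E. (if v \<in> e then 1 else 0) * (if v \<in> f then (1::real) else 0))"
    by (rule sum.cong[OF refl]) (simp only: real_degree[OF finE] power2_eq_square sum_product)
  also have "\<dots> = (\<Sum>e\<in>E. \<Sum>v\<in>V. \<Sum>f\<in>E. (if v \<in> e then 1 else 0) * (if v \<in> f then (1::real) else 0))"
    by (rule sum.swap)
  also have "\<dots> = (\<Sum>e\<in>E. \<Sum>f\<in>E. \<Sum>v\<in>V. (if v \<in> e then 1 else 0) * (if v \<in> f then (1::real) else 0))"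
    by (rule sum.cong[OF refl], rule sum.swap)
  also have "\<dots> = (\<Sum>e\<in>E. \<Sum>f\<in>E. real (card (e \<inter> f)))"
  proof (rule sum.cong[OF refl], rule sum.cong[OF refl])
    fix e f assume e: "e \<in> E" and f: "f \<in> E"
    have fs: "{v \<in> V. v \<in> e \<inter> f} = e \<inter> f" using sub[OF e] by blast
    have "(\<Sum>v\<in>V. (if v \<in> e then 1 else 0) * (if v \<in> f then (1::real) else 0))
        = (\<Sum>v\<in>V. if v \<in> e \<inter> f then 1 else 0)" by (rule sum.cong[OF refl]) simp
    also have "\<dots> = (\<Sum>v\<in>{v \<in> V. v \<in> e \<inter> f}. 1)" by (rule sum.inter_filter[OF finV, symmetric])
    also have "\<dots> = real (card (e \<inter> f))" unfolding fs by simp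
    finally show "(\<Sum>v\<in>V. (if v \<in> e then 1 else 0) * (if v \<in> f then (1::real) else 0)) = real (card (e \<inter> f))" .
  qed
  finally show ?thesis .
qed

lemma card_edge: "simple_graph V E \<Longrightarrow> e \<in> E \<Longrightarrow> card e = 2"
proof -
  assume "simple_graph V E" "e \<in> E"
  then obtain u v where "u \<in> V" "v \<in> V" "u \<noteq> v" "e = {u,v}" by (rule edge_form)
  then show ?thesis by simp
qed

lemma pair_bound:
  assumes sg: "simple_graph V E" and e: "e \<in> E" and f: "f \<in> E"
  shows "real (card (e \<inter> f)) \<le> 1 + (if e = f then 1 else 0) - (if e \<inter> f = {} then 1 else 0)"
proof -
  have ce: "card e = 2" and cf: "card f = 2" using card_edge[OF sg] e f by auto
  have fe: "finite e" "finite f" using ce cf card.infinite by (metis zero_neq_numeral)+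
  show ?thesis
  proof (cases "e = f")
    case True then show ?thesis using ce by auto
  next
    case False
    show ?thesis
    proof (cases "e \<inter> f = {}")
      case True then show ?thesis using False by simp
    next
      case ne: False
      have "card (e \<inter> f) \<le> 1"
      proof (rule ccontr)
        assume "\<not> card (e \<inter> f) \<le> 1"
        then have "card e \<le> card (e \<inter> f)" using ce by simp
        then have "e \<inter> f = e" using card_seteq[OF fe(1)] by blast
        then have "e \<subseteq> f" by blast
        then have "e = f" using card_seteq[OF fe(2)] ce cf by simp
        then show False using False by simp
      qed
      then show ?thesis using False ne by simp
    qed
  qed
qed

lemma sum_bound:
  assumes sg: "simple_graph V E"
  shows "(\<Sum>v\<in>V. real (degree E v) ^ 2)
     \<le> real (card E) * real (card E) + real (card E) - real (card {p \<in> E \<times> E. fst p \<inter> snd p = {}})"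
proof -
  have finE: "finite E" using finite_E[OF sg] .
  let ?g = "\<lambda>e f. (if e \<inter> f = {} then 1 else (0::real))"
  have "(\<Sum>v\<in>V. real (degree E v) ^ 2) = (\<Sum>e\<in>E. \<Sum>f\<in>E. real (card (e \<inter> f)))" by (rule sumsq[OF sg])
  also have "\<dots> \<le> (\<Sum>e\<in>E. \<Sum>f\<in>E. 1 + (if e = f then 1 else 0) - ?g e f)"
    by (intro sum_mono) (rule pair_bound[OF sg], assumption+)
  also have "\<dots> = (\<Sum>e\<in>E. real (card E) + 1 - (\<Sum>f\<in>E. ?g e f))"
  proof (rule sum.cong[OF refl])
    fix e assume e: "e \<in> E"
    have "(\<Sum>f\<in>E. 1 + (if e = f then 1 else 0) - ?g e f) = (\<Sum>f\<in>E. 1) + (\<Sum>f\<in>E. (if e = f then 1 else 0)) - (\<Sum>f\<in>E. ?g e f)"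
      by (simp only: sum.distrib sum_subtractf)
    also have "(\<Sum>f\<in>E. (if e = f then 1 else (0::real))) = 1" using e finE by simp
    finally show "(\<Sum>f\<in>E. 1 + (if e = f then 1 else 0) - ?g e f) = real (card E) + 1 - (\<Sum>f\<in>E. ?g e f)" by simp
  qed
  also have "\<dots> = real (card E) * (real (card E) + 1) - (\<Sum>e\<in>E. \<Sum>f\<in>E. ?g e f)"
    by (simp add: sum_subtractf)
  also have "(\<Sum>e\<in>E. \<Sum>f\<in>E. ?g e f) = (\<Sum>p\<in>E \<times> E. ?g (fst p) (snd p))"
    by (simp only: sum.cartesian_product) (simp add: case_prod_beta)
  also have "\<dots> = (\<Sum>p\<in>{p \<in> E \<times> E. fst p \<inter> snd p = {}}. 1)"
    by (rule sum.inter_filter[symmetric]) (use finE in simp)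
  also have "\<dots> = real (card {p \<in> E \<times> E. fst p \<inter> snd p = {}})" by simp
  finally show ?thesis by (simp add: algebra_simps)
qed

lemma disj_bound:
  assumes sg: "simple_graph V E" and ac: "acyclic_graph V E" and dist: "distinct [a,b,c,d]"
    and e1: "{a,b} \<in> E" and e2: "{b,c} \<in> E" and e3: "{c,d} \<in> E"
  shows "2 * card E \<le> card {p \<in> E \<times> E. fst p \<inter> snd p = {}} + 4"
proof -
  have finE: "finite E" using finite_E[OF sg] .
  define A1 where "A1 = {f \<in> E. {a,b} \<inter> f = {}}"
  define A3 where "A3 = {f \<in> E. {c,d} \<inter> f = {}}"
  define D where "D = {p \<in> E \<times> E. fst p \<inter> snd p = {}}"
  have K: False if f: "f \<in> E" "f \<noteq> {a,b}" "f \<noteq> {b,c}" "f \<noteq> {c,d}"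
      and n1: "{a,b} \<inter> f \<noteq> {}" and n3: "{c,d} \<inter> f \<noteq> {}" for f
  proof -
    obtain g where g: "g \<in> {a,b}" "g \<in> f" using n1 by blast
    obtain h where h: "h \<in> {c,d}" "h \<in> f" using n3 by blast
    obtain s t where st: "s \<in> V" "t \<in> V" "s \<noteq> t" "f = {s,t}" by (rule edge_form[OF sg f(1)])
    have gh: "g \<noteq> h" using g h dist by auto
    have fgh: "f = {g,h}" using g h st gh by auto
    consider "g = a" "h = c" | "g = a" "h = d" | "g = b" "h = c" | "g = b" "h = d" using g h by blast
    then show False
    proof cases
      case 1
      then have "{c,a} \<in> E" using fgh f by (simp add: insert_commute)
      moreover have "a \<noteq> c" using dist by simp
      ultimately show False using no_triangle[OF sg ac e1 e2] by blast
    next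
      case 2
      then have "{d,a} \<in> E" using fgh f by (simp add: insert_commute)
      then show False using no_square[OF sg ac e1 e2 e3 _ dist] by blast
    next
      case 3
      then show False using fgh f by simp
    next
      case 4
      then have "{d,b} \<in> E" using fgh f by (simp add: insert_commute)
      moreover have "b \<noteq> d" using dist by simp
      ultimately show False using no_triangle[OF sg ac e2 e3] by blast
    qed
  qed
  have ne13: "{a,b} \<noteq> {c,d}" using dist by (auto simp: doubleton_eq_iff)
  have U: "A1 \<union> A3 = E - {{b,c}}"
  proof
    show "A1 \<union> A3 \<subseteq> E - {{b,c}}" unfolding A1_def A3_def by auto
    show "E - {{b,c}} \<subseteq> A1 \<union> A3"
    proof
      fix f assume f: "f \<in> E - {{b,c}}"
      show "f \<in> A1 \<union> A3"
      proof (cases "f = {a,b}")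
        case True then show ?thesis using f dist unfolding A3_def by auto
      next
        case False
        show ?thesis
        proof (cases "f = {c,d}")
          case True then show ?thesis using f dist unfolding A1_def by auto
        next
          case False2: False
          then show ?thesis using K[of f] f False unfolding A1_def A3_def by blast
        qed
      qed
    qed
  qed
  have fin13: "finite A1" "finite A3" unfolding A1_def A3_def using finE by simp_all
  have "card E - 1 = card (A1 \<union> A3)" using U e2 finE by simp
  also have "\<dots> \<le> card A1 + card A3" by (rule card_Un_le)
  finally have s13: "card E - 1 \<le> card A1 + card A3" .
  define P where "P = {{a,b}} \<times> A1 \<union> {{c,d}} \<times> A3"
  define Q where "Q = A1 \<times> {{a,b}} \<union> A3 \<times> {{c,d}}"
  have finP: "finite P" "finite Q" unfolding P_def Q_def using fin13 by simp_all
  have cP: "card P = card A1 + card A3" unfolding P_def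
    by (subst card_Un_disjoint) (use fin13 ne13 in \<open>auto simp: card_cartesian_product\<close>)
  have cQ: "card Q = card A1 + card A3" unfolding Q_def
    by (subst card_Un_disjoint) (use fin13 ne13 in \<open>auto simp: card_cartesian_product\<close>)
  have "P \<inter> Q \<subseteq> {({a,b},{c,d}), ({c,d},{a,b})}"
    unfolding P_def Q_def A1_def A3_def by auto
  then have "card (P \<inter> Q) \<le> card {({a,b},{c,d}), ({c,d},{a,b})}" by (intro card_mono) auto
  moreover have "card {({a,b},{c,d}), ({c,d},{a,b})} \<le> 2" by (rule card_insert_le_m1) simp_all
  ultimately have cPQ: "card (P \<inter> Q) \<le> 2" by linarith
  have "P \<union> Q \<subseteq> D" unfolding P_def Q_def A1_def A3_def D_def using e1 e3 by auto
  moreover have "finite D" unfolding D_def by (rule finite_subset[of _ "E \<times> E"]) (use finE in auto)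
  ultimately have "card (P \<union> Q) \<le> card D" by (rule card_mono[rotated])
  moreover have "card (P \<union> Q) + card (P \<inter> Q) = card P + card Q" using card_Un_Int[OF finP] by simp
  moreover have "card E \<ge> 1"
  proof -
    have "E \<noteq> {}" using e2 by blast
    then show "card E \<ge> 1" using finE by (simp add: Suc_le_eq card_gt_0_iff)
  qed
  ultimately show ?thesis using cP cQ cPQ s13 unfolding D_def by linarith
qed

theorem mainTheorem2:
  fixes a :: real and V :: "'a set" and E :: "'a set set"
  assumes "a \<ge> 0"
    and "is_tree V E"
    and "real (card V) > 3 * a + 3"
    and "E0C V E \<le> a"
  shows "\<exists>v\<in>V. degree E v = card V - 1"
proof (rule ccontr)
  assume "\<not> ?thesis"
  then have ns: "\<forall>v\<in>V. degree E v \<noteq> card V - 1" by blast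
  have sg: "simple_graph V E" and ac: "acyclic_graph V E" and ne: "V \<noteq> {}"
    using assms(2) unfolding is_tree_def by auto
  obtain p q r s where pqrs: "distinct [p,q,r,s]" "{p,q} \<in> E" "{q,r} \<in> E" "{r,s} \<in> E"
    using path4[OF assms(2) ns] by blast
  define N where "N = real (card V)"
  define M where "M = real (card E)"
  define S where "S = (\<Sum>v\<in>V. real (degree E v) ^ 2)"
  define Dc where "Dc = real (card {p \<in> E \<times> E. fst p \<inter> snd p = {}})"
  have dB: "2 * M \<le> Dc + 4" using disj_bound[OF sg ac pqrs] unfolding M_def Dc_def by linarith
  have sB: "S \<le> M * M + M - Dc" using sum_bound[OF sg] unfolding S_def M_def Dc_def .
  have mn: "M + 1 \<le> N" using acyclic_card[OF sg ac ne] unfolding M_def N_def by linarith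
  have M0: "M \<ge> 0" unfolding M_def by simp
  have N3: "N > 3" using assms(1,3) unfolding N_def by linarith
  have "(M - (N - 1)) * (M + N - 2) \<le> 0"
    using mn N3 M0 by (intro mult_nonpos_nonneg) linarith+
  then have prod: "M * M - M \<le> (N - 1) * (N - 1) - (N - 1)" by (simp add: algebra_simps)
  have key: "N * (N - 1) - S \<ge> 2 * N - 6" using prod sB dB by (simp add: algebra_simps)
  have "E0C V E = (N * (N - 1) - S) / 6"
    unfolding E0C_def second_moment_degree_def N_def[symmetric] S_def[symmetric]
    using N3 by (simp add: field_simps)
  also have "\<dots> \<ge> (2 * N - 6) / 6" using key by (simp add: divide_right_mono)
  finally have "E0C V E \<ge> (2 * N - 6) / 6" .
  moreover have "(2 * N - 6) / 6 > a" using assms(3) unfolding N_def by simp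
  ultimately show False using assms(4) by linarith
qed

end
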